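(* There exist constants $M_{t,j}\in[0,\infty)$ ($t\in\mathcal T$, $j=1,2,3$) and $M_J\in[0,\infty)$ ($J\in\mathcal N$), depending only on the multilinear program and not on $\hat v$, such that for every indicator vector $\hat v\in\{0,1\}^{\mathcal T}$ of a proper triple set and every optimal solution $(\lambda,\mu)$ of the linear program $\mathrm{D}(\hat v)$, we have $\lambda_{t,j}\le M_{t,j}$ for all $t\in\mathcal T$, $j=1,2,3$, and $\mu_J\le M_J$ for all $J\in\mathcal N$.
   Context: A multilinear program has data $n,m$, coefficients $\alpha_i\in\mathbb{R}$ and nonempty index sets $J_i\subseteq[n]$. Let $\mathcal N=\bigcup_i\{J:\emptyset\ne J\subseteq J_i\}$ and $\beta_J=\sum_{i:J_i=J}\alpha_i$. A triple is $t=(J,J',J'')$ with $J''\in\mathcal N$, $|J''|\ge2$, $J,J'$ nonempty, disjoint, $J\cup J'=J''$, listed with $J,J'$ in lexicographic order; $\mathsf{tail1}(t)=J$, $\mathsf{tail2}(t)=J'$, $\mathsf{head}(t)=J''$; $\mathcal T$ is the set of all triples. A proper triple set is a set $T\subseteq\mathcal T$ containing a subset $T'$ such that (1) every $J_i$ with $|J_i|>1$ is the head of some triple in $T'$, and (2) whenever a set $J$ with $|J|>1$ is the first or second element of a triple in $T'$, $J$ is the head of a different triple in $T'$; its indicator vector has $\hat v_t=1$ iff $t\in T$. $\mathrm{D}(\hat v)$: maximize $-\sum_{t\in\mathcal T}[(1-\hat v_t)(\lambda_{t,1}+\lambda_{t,2})+(2-\hat v_t)\lambda_{t,3}]-\sum_{J\in\mathcal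 N}\mu_J$ over $\lambda\ge0,\mu\ge0$ subject to, for every $J\in\mathcal N$, $\beta_J+\sum_{t:\mathsf{tail1}(t)=J}(-\lambda_{t,1}+\lambda_{t,3})+\sum_{t:\mathsf{tail2}(t)=J}(-\lambda_{t,2}+\lambda_{t,3})+\sum_{t:\mathsf{head}(t)=J}(\lambda_{t,1}+\lambda_{t,2}-\lambda_{t,3})+\mu_J\ge0$. *)

theory Defs
  imports Complex_Main
begin

type_synonym triple = "nat set \<times> nat set \<times> nat set"

text \<open>Data of a multilinear program: coefficients alpha i and index sets Js i, for i in {1..m},
  each Js i a nonempty subset of {1..n}.\<close>

definition NN :: "nat \<Rightarrow> (nat \<Rightarrow> nat set) \<Rightarrow> nat set set" where
  "NN m Js = {J. \<exists>i\<in>{1..m}. J \<noteq> {} \<and> J \<subseteq> Js i}"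

definition beta :: "nat \<Rightarrow> (nat \<Rightarrow> real) \<Rightarrow> (nat \<Rightarrow> nat set) \<Rightarrow> nat set \<Rightarrow> real" where
  "beta m alpha Js J = (\<Sum>i\<in>{i\<in>{1..m}. Js i = J}. alpha i)"

definition lex_less :: "nat set \<Rightarrow> nat set \<Rightarrow> bool" where
  "lex_less J J' \<longleftrightarrow> (sorted_list_of_set J, sorted_list_of_set J') \<in> lexord {(x, y). x < y}"

definition tail1 :: "triple \<Rightarrow> nat set" where "tail1 t = fst t"
definition tail2 :: "triple \<Rightarrow> nat set" where "tail2 t = fst (snd t)"
definition head :: "triple \<Rightarrow> nat set" where "head t = snd (snd t)"

definition Triples :: "nat \<Rightarrow> (nat \<Rightarrow> nat set) \<Rightarrow> triple set" where
  "Triples m Js = {(J, J', J''). J'' \<in> NN m Js \<and> card J'' \<ge> 2 \<and> J \<noteq> {} \<and> J' \<noteq> {}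
      \<and> J \<inter> J' = {} \<and> J \<union> J' = J'' \<and> lex_less J J'}"

definition proper_triple_set :: "nat \<Rightarrow> (nat \<Rightarrow> nat set) \<Rightarrow> triple set \<Rightarrow> bool" where
  "proper_triple_set m Js T \<longleftrightarrow> T \<subseteq> Triples m Js \<and>
     (\<exists>T' \<subseteq> T.
        (\<forall>i\<in>{1..m}. card (Js i) > 1 \<longrightarrow> (\<exists>t\<in>T'. head t = Js i)) \<and>
        (\<forall>t\<in>T'. \<forall>J\<in>{tail1 t, tail2 t}. card J > 1 \<longrightarrow> (\<exists>t'\<in>T'. t' \<noteq> t \<and> head t' = J)))"

definition indicator_vec :: "triple set \<Rightarrow> triple \<Rightarrow> real" where
  "indicator_vec T t = (if t \<in> T then 1 else 0)"

definition D_feasible :: "nat \<Rightarrow> (nat \<Rightarrow> real) \<Rightarrow> (nat \<Rightarrow> nat set)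
    \<Rightarrow> (triple \<Rightarrow> nat \<Rightarrow> real) \<Rightarrow> (nat set \<Rightarrow> real) \<Rightarrow> bool" where
  "D_feasible m alpha Js lam mu \<longleftrightarrow>
     (\<forall>t\<in>Triples m Js. \<forall>j\<in>{1,2,3}. lam t j \<ge> 0) \<and>
     (\<forall>J\<in>NN m Js. mu J \<ge> 0) \<and>
     (\<forall>J\<in>NN m Js.
        beta m alpha Js J
        + (\<Sum>t\<in>{t\<in>Triples m Js. tail1 t = J}. - lam t 1 + lam t 3)
        + (\<Sum>t\<in>{t\<in>Triples m Js. tail2 t = J}. - lam t 2 + lam t 3)
        + (\<Sum>t\<in>{t\<in>Triples m Js. head t = J}. lam t 1 + lam t 2 - lam t 3)
        + mu J \<ge> 0)"

definition D_objective :: "nat \<Rightarrow> (nat \<Rightarrow> nat set) \<Rightarrow> (triple \<Rightarrow> real)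
    \<Rightarrow> (triple \<Rightarrow> nat \<Rightarrow> real) \<Rightarrow> (nat set \<Rightarrow> real) \<Rightarrow> real" where
  "D_objective m Js v lam mu =
     - (\<Sum>t\<in>Triples m Js. (1 - v t) * (lam t 1 + lam t 2) + (2 - v t) * lam t 3)
     - (\<Sum>J\<in>NN m Js. mu J)"

definition D_optimal :: "nat \<Rightarrow> (nat \<Rightarrow> real) \<Rightarrow> (nat \<Rightarrow> nat set) \<Rightarrow> (triple \<Rightarrow> real)
    \<Rightarrow> (triple \<Rightarrow> nat \<Rightarrow> real) \<Rightarrow> (nat set \<Rightarrow> real) \<Rightarrow> bool" where
  "D_optimal m alpha Js v lam mu \<longleftrightarrow>
     D_feasible m alpha Js lam mu \<and>
     (\<forall>lam' mu'. D_feasible m alpha Js lam' mu' \<longrightarrow>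
        D_objective m Js v lam' mu' \<le> D_objective m Js v lam mu)"

end

theory Submission
  imports Defs
begin

lemma NN_sub:
  assumes "\<And>i. i \<in> {1..m} \<Longrightarrow> Js i \<noteq> {} \<and> Js i \<subseteq> {1..n}"
  shows "NN m Js \<subseteq> Pow {1..n}"
  using assms unfolding NN_def by blast

lemma NN_down: "J'' \<in> NN m Js \<Longrightarrow> J \<noteq> {} \<Longrightarrow> J \<subseteq> J'' \<Longrightarrow> J \<in> NN m Js"
  unfolding NN_def by blast

lemma Triples_props:
  assumes fin: "\<forall>J\<in>NN m Js. finite J" and t: "t \<in> Triples m Js"
  shows "tail1 t \<in> NN m Js \<and> tail2 t \<in> NN m Js \<and> head t \<in> NN m Js \<and>
         card (tail1 t) < card (head t) \<and> card (tail2 t) < card (head t) \<and> tail1 t \<noteq> {} \<and> tail2 t \<noteq> {}"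
proof -
  obtain a b c where tt: "t = (a,b,c)" by (cases t) auto
  have h: "c \<in> NN m Js" "a \<noteq> {}" "b \<noteq> {}" "a \<inter> b = {}" "a \<union> b = c"
    using t unfolding tt Triples_def by auto
  have fc: "finite c" using fin h(1) by auto
  have "a \<subset> c" using h by blast
  hence c1: "card a < card c" using fc by (simp add: psubset_card_mono)
  have "b \<subset> c" using h by blast
  hence c2: "card b < card c" using fc by (simp add: psubset_card_mono)
  show ?thesis unfolding tt tail1_def tail2_def head_def
    using h c1 c2 NN_down[of c m Js a] NN_down[of c m Js b] by auto
qed

lemma Triples_sub:
  assumes "\<And>i. i \<in> {1..m} \<Longrightarrow> Js i \<noteq> {} \<and> Js i \<subseteq> {1..n}"
  shows "Triples m Js \<subseteq> Pow {1..n} \<times> Pow {1..n} \<times> Pow {1..n}"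
proof
  fix t assume t: "t \<in> Triples m Js"
  have NS: "NN m Js \<subseteq> Pow {1..n}" using NN_sub[OF assms] .
  have "\<forall>J\<in>NN m Js. finite J" using NS by (meson PowD finite_atLeastAtMost finite_subset subsetD)
  from Triples_props[OF this t] NS show "t \<in> Pow {1..n} \<times> Pow {1..n} \<times> Pow {1..n}"
    unfolding tail1_def tail2_def head_def by (cases t) auto
qed

lemma key:
  fixes lam :: "triple \<Rightarrow> nat \<Rightarrow> real" and mu :: "nat set \<Rightarrow> real"
  assumes finN: "finite (NN m Js)" and finT: "finite (Triples m Js)"
    and finJ: "\<forall>J\<in>NN m Js. finite J"
    and feas: "D_feasible m alpha Js lam mu"
    and S: "(\<Sum>t\<in>Triples m Js. lam t 3) \<le> B" and muB: "\<forall>J\<in>NN m Js. mu J \<le> B" and B0: "B \<ge> 0"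
  shows "\<forall>t\<in>Triples m Js.
     lam t 1 \<le> ((\<Sum>J\<in>NN m Js. \<bar>beta m alpha Js J\<bar>) + 3*B) * (1 + 2 * real (card (Triples m Js))) ^ card (tail1 t) \<and>
     lam t 2 \<le> ((\<Sum>J\<in>NN m Js. \<bar>beta m alpha Js J\<bar>) + 3*B) * (1 + 2 * real (card (Triples m Js))) ^ card (tail2 t)"
proof -
  define TT where "TT = Triples m Js"
  define A where "A = (\<Sum>J\<in>NN m Js. \<bar>beta m alpha Js J\<bar>) + 3*B"
  define N where "N = card TT"
  define C where "C k = A * (1 + 2 * real N) ^ k" for k
  have A0: "A \<ge> 0" unfolding A_def using B0 by (simp add: sum_nonneg)
  have C0: "C k \<ge> 0" for k unfolding C_def using A0 by simp
  have Cmono: "k \<le> k' \<Longrightarrow> C k \<le> C k'" for k k'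
    unfolding C_def using A0 by (intro mult_left_mono power_increasing) auto
  have lam0: "\<And>t j. t \<in> TT \<Longrightarrow> j \<in> {1,2,3} \<Longrightarrow> lam t j \<ge> 0"
    using feas unfolding D_feasible_def TT_def by auto
  have mu0: "\<And>J. J \<in> NN m Js \<Longrightarrow> mu J \<ge> 0"
    using feas unfolding D_feasible_def by auto
  have cons: "\<And>J. J \<in> NN m Js \<Longrightarrow> beta m alpha Js J
        + (\<Sum>t\<in>{t\<in>TT. tail1 t = J}. - lam t 1 + lam t 3)
        + (\<Sum>t\<in>{t\<in>TT. tail2 t = J}. - lam t 2 + lam t 3)
        + (\<Sum>t\<in>{t\<in>TT. head t = J}. lam t 1 + lam t 2 - lam t 3)
        + mu J \<ge> 0"
    using feas unfolding D_feasible_def TT_def by auto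
  have props: "\<And>t. t \<in> TT \<Longrightarrow> tail1 t \<in> NN m Js \<and> tail2 t \<in> NN m Js \<and> head t \<in> NN m Js \<and>
         card (tail1 t) < card (head t) \<and> card (tail2 t) < card (head t) \<and> tail1 t \<noteq> {} \<and> tail2 t \<noteq> {}"
    using Triples_props[OF finJ] unfolding TT_def by blast
  have finTT: "finite TT" using finT TT_def by simp
  have main: "\<forall>t\<in>TT. (card (tail1 t) = k \<longrightarrow> lam t 1 \<le> C k) \<and> (card (tail2 t) = k \<longrightarrow> lam t 2 \<le> C k)" for k
  proof (induction k rule: less_induct)
    case (less k)
    have outb: "(\<Sum>t\<in>{t\<in>TT. tail1 t = J}. lam t 1) + (\<Sum>t\<in>{t\<in>TT. tail2 t = J}. lam t 2) \<le> C k"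
      if J: "J \<in> NN m Js" "card J = k" for J
    proof -
      have Jne: "J \<noteq> {}" using J NN_def by auto
      have "finite J" using finJ J by auto
      hence kpos: "k \<ge> 1" using Jne J(2) card_gt_0_iff[of J] by linarith
      define X1 where "X1 = {t\<in>TT. tail1 t = J}"
      define X2 where "X2 = {t\<in>TT. tail2 t = J}"
      define XH where "XH = {t\<in>TT. head t = J}"
      have fX: "finite X1" "finite X2" "finite XH" using finTT unfolding X1_def X2_def XH_def by auto
      have c: "beta m alpha Js J + (\<Sum>t\<in>X1. - lam t 1 + lam t 3) + (\<Sum>t\<in>X2. - lam t 2 + lam t 3)
        + (\<Sum>t\<in>XH. lam t 1 + lam t 2 - lam t 3) + mu J \<ge> 0"
        using cons[OF J(1)] unfolding X1_def X2_def XH_def .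
      have e1: "(\<Sum>t\<in>X1. - lam t 1 + lam t 3) = - (\<Sum>t\<in>X1. lam t 1) + (\<Sum>t\<in>X1. lam t 3)"
        by (simp add: sum.distrib sum_negf sum_subtractf)
      have e2: "(\<Sum>t\<in>X2. - lam t 2 + lam t 3) = - (\<Sum>t\<in>X2. lam t 2) + (\<Sum>t\<in>X2. lam t 3)"
        by (simp add: sum.distrib sum_negf sum_subtractf)
      have s1: "(\<Sum>t\<in>X1. lam t 3) \<le> (\<Sum>t\<in>TT. lam t 3)"
        by (rule sum_mono2[OF finTT]) (auto simp: X1_def lam0)
      have s2: "(\<Sum>t\<in>X2. lam t 3) \<le> (\<Sum>t\<in>TT. lam t 3)"
        by (rule sum_mono2[OF finTT]) (auto simp: X2_def lam0)
      have h1: "(\<Sum>t\<in>XH. lam t 1 + lam t 2 - lam t 3) \<le> (\<Sum>t\<in>XH. 2 * C (k - 1))"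
      proof (rule sum_mono)
        fix s assume s: "s \<in> XH"
        hence sT: "s \<in> TT" and hs: "head s = J" by (auto simp: XH_def)
        have p: "card (tail1 s) < k" "card (tail2 s) < k" using props[OF sT] hs J(2) by auto
        have "lam s 1 \<le> C (card (tail1 s))" using less.IH[OF p(1)] sT by blast
        also have "\<dots> \<le> C (k - 1)" using p(1) by (intro Cmono) auto
        finally have a1: "lam s 1 \<le> C (k - 1)" .
        have "lam s 2 \<le> C (card (tail2 s))" using less.IH[OF p(2)] sT by blast
        also have "\<dots> \<le> C (k - 1)" using p(2) by (intro Cmono) auto
        finally have a2: "lam s 2 \<le> C (k - 1)" .
        show "lam s 1 + lam s 2 - lam s 3 \<le> 2 * C (k - 1)" using a1 a2 lam0[OF sT, of 3] by simp
      qed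
      have cXH: "card XH \<le> N" unfolding N_def XH_def by (rule card_mono[OF finTT]) auto
      have h2: "(\<Sum>t\<in>XH. 2 * C (k - 1)) \<le> real N * (2 * C (k - 1))"
        using cXH C0[of "k-1"] by (simp add: mult_right_mono)
      have bb: "beta m alpha Js J \<le> (\<Sum>J\<in>NN m Js. \<bar>beta m alpha Js J\<bar>)"
      proof -
        have "beta m alpha Js J \<le> \<bar>beta m alpha Js J\<bar>" by simp
        also have "\<dots> \<le> (\<Sum>J\<in>NN m Js. \<bar>beta m alpha Js J\<bar>)"
          using J(1) finN by (intro member_le_sum) auto
        finally show ?thesis .
      qed
      have mJ: "mu J \<le> B" using muB J(1) by auto
      have "(\<Sum>t\<in>X1. lam t 1) + (\<Sum>t\<in>X2. lam t 2) \<le> A + real N * (2 * C (k - 1))"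
        using c e1 e2 s1 s2 h1 h2 bb mJ S unfolding A_def TT_def by linarith
      also have "\<dots> \<le> C k"
      proof -
        have "A \<le> C (k - 1)" unfolding C_def using A0 by (simp add: mult_le_cancel_left1 one_le_power)
        hence "A + real N * (2 * C (k - 1)) \<le> C (k-1) * (1 + 2 * real N)" by (simp add: algebra_simps)
        also have "\<dots> = C k" unfolding C_def using kpos
          by (metis mult.assoc power_Suc2 Suc_diff_1 less_le_trans zero_less_one)
        finally show ?thesis .
      qed
      finally show ?thesis unfolding X1_def X2_def .
    qed
    show ?case
    proof (intro ballI conjI impI)
      fix t assume t: "t \<in> TT" and ck: "card (tail1 t) = k"
      have J: "tail1 t \<in> NN m Js" using props[OF t] by auto
      have "lam t 1 \<le> (\<Sum>s\<in>{s\<in>TT. tail1 s = tail1 t}. lam s 1)"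
        using t finTT by (intro member_le_sum) (auto simp: lam0)
      also have "\<dots> \<le> (\<Sum>s\<in>{s\<in>TT. tail1 s = tail1 t}. lam s 1) + (\<Sum>s\<in>{s\<in>TT. tail2 s = tail1 t}. lam s 2)"
        using lam0 by (intro add_increasing2 sum_nonneg) auto
      also have "\<dots> \<le> C k" using outb[OF J ck] .
      finally show "lam t 1 \<le> C k" .
    next
      fix t assume t: "t \<in> TT" and ck: "card (tail2 t) = k"
      have J: "tail2 t \<in> NN m Js" using props[OF t] by auto
      have "lam t 2 \<le> (\<Sum>s\<in>{s\<in>TT. tail2 s = tail2 t}. lam s 2)"
        using t finTT by (intro member_le_sum) (auto simp: lam0)
      also have "\<dots> \<le> (\<Sum>s\<in>{s\<in>TT. tail1 s = tail2 t}. lam s 1) + (\<Sum>s\<in>{s\<in>TT. tail2 s = tail2 t}. lam s 2)"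
        using lam0 by (intro add_increasing sum_nonneg) auto
      also have "\<dots> \<le> C k" using outb[OF J ck] .
      finally show "lam t 2 \<le> C k" .
    qed
  qed
  show ?thesis using main unfolding C_def A_def N_def TT_def by blast
qed


theorem proposition3:
  fixes n m :: nat and alpha :: "nat \<Rightarrow> real" and Js :: "nat \<Rightarrow> nat set"
  assumes "\<And>i. i \<in> {1..m} \<Longrightarrow> Js i \<noteq> {} \<and> Js i \<subseteq> {1..n}"
  shows "\<exists>(Mt :: triple \<Rightarrow> nat \<Rightarrow> real) (MN :: nat set \<Rightarrow> real).
    (\<forall>t\<in>Triples m Js. \<forall>j\<in>{1,2,3}. Mt t j \<ge> 0) \<and> (\<forall>J\<in>NN m Js. MN J \<ge> 0) \<and>
    (\<forall>T lam mu. proper_triple_set m Js T \<longrightarrow>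
        D_optimal m alpha Js (indicator_vec T) lam mu \<longrightarrow>
        (\<forall>t\<in>Triples m Js. \<forall>j\<in>{1,2,3}. lam t j \<le> Mt t j) \<and>
        (\<forall>J\<in>NN m Js. mu J \<le> MN J))"
proof -
  have NS: "NN m Js \<subseteq> Pow {1..n}" using NN_sub[OF assms] .
  have finN: "finite (NN m Js)" using NS by (meson finite_Pow_iff finite_atLeastAtMost finite_subset)
  have finJ: "\<forall>J\<in>NN m Js. finite J" using NS by (meson PowD finite_atLeastAtMost finite_subset subsetD)
  have finT: "finite (Triples m Js)" using Triples_sub[OF assms]
    by (meson finite_Pow_iff finite_atLeastAtMost finite_SigmaI finite_subset)
  define B where "B = (\<Sum>J\<in>NN m Js. max 0 (- beta m alpha Js J))"
  define A where "A = (\<Sum>J\<in>NN m Js. \<bar>beta m alpha Js J\<bar>) + 3*B"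
  define Q where "Q = 1 + 2 * real (card (Triples m Js))"
  define Mt where "Mt t j = (if j = 3 then B else if j = 1 then A * Q ^ card (tail1 t) else A * Q ^ card (tail2 t))"
    for t :: triple and j :: nat
  have B0: "B \<ge> 0" unfolding B_def by (simp add: sum_nonneg)
  have A0: "A \<ge> 0" unfolding A_def using B0 by (simp add: sum_nonneg)
  have Q0: "Q \<ge> 0" unfolding Q_def by simp
  show ?thesis
  proof (intro exI[of _ Mt] exI[of _ "\<lambda>J. B"] conjI)
    show "\<forall>t\<in>Triples m Js. \<forall>j\<in>{1,2,3}. 0 \<le> Mt t j" unfolding Mt_def using A0 B0 Q0 by simp
  next
    show "\<forall>J\<in>NN m Js. 0 \<le> B" using B0 by simp
  next
    show "\<forall>T lam mu. proper_triple_set m Js T \<longrightarrow>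
        D_optimal m alpha Js (indicator_vec T) lam mu \<longrightarrow>
        (\<forall>t\<in>Triples m Js. \<forall>j\<in>{1,2,3}. lam t j \<le> Mt t j) \<and>
        (\<forall>J\<in>NN m Js. mu J \<le> B)"
    proof (intro allI impI)
    fix T lam mu
    assume P: "proper_triple_set m Js T" and O: "D_optimal m alpha Js (indicator_vec T) lam mu"
    have feas: "D_feasible m alpha Js lam mu" using O D_optimal_def by blast
    have lam0: "\<And>t j. t \<in> Triples m Js \<Longrightarrow> j \<in> {1,2,3} \<Longrightarrow> lam t j \<ge> 0"
      using feas unfolding D_feasible_def by auto
    have mu0: "\<And>J. J \<in> NN m Js \<Longrightarrow> mu J \<ge> 0"
      using feas unfolding D_feasible_def by auto
    define mu' where "mu' J = max 0 (- beta m alpha Js J)" for J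
    have f': "D_feasible m alpha Js (\<lambda>_ _. 0) mu'"
      unfolding D_feasible_def mu'_def by auto
    hence "D_objective m Js (indicator_vec T) (\<lambda>_ _. 0) mu' \<le> D_objective m Js (indicator_vec T) lam mu"
      using O D_optimal_def by blast
    hence ob: "(\<Sum>t\<in>Triples m Js. (1 - indicator_vec T t) * (lam t 1 + lam t 2) + (2 - indicator_vec T t) * lam t 3)
       + (\<Sum>J\<in>NN m Js. mu J) \<le> B"
      unfolding D_objective_def B_def mu'_def by simp
    have termge: "lam t 3 \<le> (1 - indicator_vec T t) * (lam t 1 + lam t 2) + (2 - indicator_vec T t) * lam t 3"
      if t: "t \<in> Triples m Js" for t
      using lam0[OF t, of 1] lam0[OF t, of 2] lam0[OF t, of 3]
      by (cases "t \<in> T") (auto simp: indicator_vec_def)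
    have S1: "(\<Sum>t\<in>Triples m Js. lam t 3) \<le> (\<Sum>t\<in>Triples m Js. (1 - indicator_vec T t) * (lam t 1 + lam t 2) + (2 - indicator_vec T t) * lam t 3)"
      using termge by (rule sum_mono)
    have S3: "0 \<le> (\<Sum>t\<in>Triples m Js. lam t 3)" using lam0 by (simp add: sum_nonneg)
    have SM: "0 \<le> (\<Sum>J\<in>NN m Js. mu J)" using mu0 by (simp add: sum_nonneg)
    have S: "(\<Sum>t\<in>Triples m Js. lam t 3) \<le> B" using S1 ob SM by linarith
    have muB: "\<forall>J\<in>NN m Js. mu J \<le> B"
    proof
      fix J assume J: "J \<in> NN m Js"
      have "mu J \<le> (\<Sum>J\<in>NN m Js. mu J)" using J finN mu0 by (intro member_le_sum) auto
      thus "mu J \<le> B" using S1 ob S3 by linarith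
    qed
    have K: "\<forall>t\<in>Triples m Js. lam t 1 \<le> A * Q ^ card (tail1 t) \<and> lam t 2 \<le> A * Q ^ card (tail2 t)"
      using key[OF finN finT finJ feas S muB B0] unfolding A_def Q_def by blast
    have "\<forall>t\<in>Triples m Js. \<forall>j\<in>{1, 2, 3}. lam t j \<le> Mt t j"
    proof (intro ballI)
      fix t and j :: nat assume t: "t \<in> Triples m Js" and j: "j \<in> {1,2,3}"
      have l3: "lam t 3 \<le> B"
      proof -
        have "lam t 3 \<le> (\<Sum>t\<in>Triples m Js. lam t 3)" using t finT lam0 by (intro member_le_sum) auto
        thus ?thesis using S by linarith
      qed
      show "lam t j \<le> Mt t j" using j K t l3 unfolding Mt_def by auto
    qed
    thus "(\<forall>t\<in>Triples m Js. \<forall>j\<in>{1,2,3}. lam t j \<le> Mt t j) \<and>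
        (\<forall>J\<in>NN m Js. mu J \<le> B)" using muB by blast
    qed
  qed
qed

end
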